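(* Let $k \geq 2$, let $\Delta_k = \{\mathbf{c} \in [0,1]^k : \sum_{i=1}^k c_i = 1\}$, and fix a point $\mathbf{x}$ with conditional class distribution $(p(1|\mathbf{x}),\dots,p(k|\mathbf{x})) \in \Delta_k$ such that $y^* = \arg\max_y p(y|\mathbf{x})$ is unique. Let $q>1$ and consider $$R_{\mathrm{GCE}}(\mathbf{c}) = \sum_{y=1}^k p(y|\mathbf{x})\,\frac{1-c_y^q}{q}, \qquad \mathbf{c} \in \Delta_k.$$ Then the minimizer $f^*_{\mathrm{GCE}}(\mathbf{x})$ of $R_{\mathrm{GCE}}$ over $\Delta_k$ is $\mathbf{e}^{(y^* )}$, where $\mathbf{e}^{(t)}$ denotes the one-hot vector with $\mathbf{e}^{(t)}_j = 1$ iff $j=t$.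
   Context: This is a $k$-class classification setting: a classifier $f$ maps inputs $\mathbf{x}$ to the probability simplex $\Delta_k$, and $p(y|\mathbf{x})$ is the class posterior. The generalized cross entropy loss is $L_{\mathrm{GCE}}(f(\mathbf{x}),y) = \frac{1-f_y(\mathbf{x})^q}{q}$, here used with $q>1$. The optimal classifier $f^*_{\mathrm{GCE}}$ is taken to minimize the pointwise risk $\sum_y L_{\mathrm{GCE}}(f(\mathbf{x}),y)\,p(y|\mathbf{x})$ separately for each $\mathbf{x}$. *)

theory Defs
  imports Complex_Main
begin

text \<open>Classes are the elements of a finite type 'k (k = CARD('k)).
  The probability simplex Delta_k.\<close>
definition simplex :: "('k::finite \<Rightarrow> real) set" where
  "simplex = {c. (\<forall>i. 0 \<le> c i \<and> c i \<le> 1) \<and> (\<Sum>i\<in>UNIV. c i) = 1}"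

definition R_GCE :: "real \<Rightarrow> ('k::finite \<Rightarrow> real) \<Rightarrow> ('k \<Rightarrow> real) \<Rightarrow> real" where
  "R_GCE q p c = (\<Sum>y\<in>UNIV. p y * ((1 - c y powr q) / q))"

definition onehot :: "'k \<Rightarrow> ('k \<Rightarrow> real)" where
  "onehot t = (\<lambda>j. if j = t then 1 else 0)"

end

theory Submission
  imports Defs
begin

lemma powr_le_self: "0 \<le> (x::real) \<Longrightarrow> x \<le> 1 \<Longrightarrow> q \<ge> 1 \<Longrightarrow> x powr q \<le> x"
proof (cases "x = 0")
  case False
  assume h: "0 \<le> x" "x \<le> 1" "q \<ge> 1"
  then have "x powr q \<le> x powr 1" using False by (intro powr_mono') auto
  then show ?thesis using h False by simp
qed simp

lemma R_eq: "p \<in> simplex \<Longrightarrow> R_GCE q p c = 1/q - (\<Sum>y\<in>UNIV. p y * c y powr q) / q"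
  unfolding R_GCE_def simplex_def
  by (simp add: diff_divide_distrib right_diff_distrib sum_subtractf sum_divide_distrib[symmetric] sum_distrib_left[symmetric])

lemma onehot_simplex: "onehot t \<in> simplex"
  unfolding simplex_def onehot_def by auto

lemma S_onehot: fixes t :: "'k::finite" shows "(\<Sum>y\<in>UNIV. p y * onehot t y powr q) = p t"
proof -
  have "\<And>y. p y * onehot t y powr q = (if y = t then p t else 0)" by (simp add: onehot_def)
  then show ?thesis by (simp add: sum.delta)
qed

lemma S_bound:
  fixes p :: "'k::finite \<Rightarrow> real"
  assumes p: "p \<in> simplex" and mx: "\<forall>y. y \<noteq> ystar \<longrightarrow> p y < p ystar" and q: "q > 1"
    and c: "c \<in> simplex"
  shows "(\<Sum>y\<in>UNIV. p y * c y powr q) \<le> p ystar"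
    and "(\<Sum>y\<in>UNIV. p y * c y powr q) = p ystar \<Longrightarrow> c = onehot ystar"
proof -
  have c0: "\<And>i. 0 \<le> c i" and c1: "\<And>i. c i \<le> 1" and cs: "(\<Sum>i\<in>UNIV. c i) = 1"
    using c unfolding simplex_def by auto
  have p0: "\<And>i. 0 \<le> p i" using p unfolding simplex_def by auto
  have pl: "\<And>y. p y \<le> p ystar" using mx by (metis order.refl less_imp_le)
  have A: "(\<Sum>y\<in>UNIV. p y * c y powr q) \<le> (\<Sum>y\<in>UNIV. p y * c y)"
    by (intro sum_mono mult_left_mono powr_le_self) (use c0 c1 p0 q in auto)
  have B: "(\<Sum>y\<in>UNIV. p y * c y) \<le> (\<Sum>y\<in>UNIV. p ystar * c y)"
    by (intro sum_mono mult_right_mono) (use c0 pl in auto)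
  have C: "(\<Sum>y\<in>UNIV. p ystar * c y) = p ystar" using cs by (simp add: sum_distrib_left[symmetric])
  show "(\<Sum>y\<in>UNIV. p y * c y powr q) \<le> p ystar" using A B C by linarith
  assume eq: "(\<Sum>y\<in>UNIV. p y * c y powr q) = p ystar"
  have D: "(\<Sum>y\<in>UNIV. (p ystar - p y) * c y) = 0"
  proof -
    have "(\<Sum>y\<in>UNIV. (p ystar - p y) * c y) = (\<Sum>y\<in>UNIV. p ystar * c y) - (\<Sum>y\<in>UNIV. p y * c y)"
      by (simp add: left_diff_distrib sum_subtractf)
    moreover have "\<dots> \<le> 0" using A B C eq by linarith
    moreover have "(\<Sum>y\<in>UNIV. (p ystar - p y) * c y) \<ge> 0"
      by (intro sum_nonneg mult_nonneg_nonneg) (use c0 pl in auto)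
    ultimately show ?thesis by linarith
  qed
  have E: "\<forall>y\<in>UNIV. (p ystar - p y) * c y = 0"
    using D by (subst (asm) sum_nonneg_eq_0_iff) (use c0 pl in \<open>auto intro: mult_nonneg_nonneg\<close>)
  have F: "\<And>y. y \<noteq> ystar \<Longrightarrow> c y = 0"
  proof -
    fix y assume "y \<noteq> ystar"
    then have "p ystar - p y \<noteq> 0" using mx by force
    then show "c y = 0" using E by auto
  qed
  have "(\<Sum>i\<in>UNIV. c i) = c ystar + (\<Sum>i\<in>UNIV - {ystar}. c i)"
    by (simp add: sum.remove)
  also have "(\<Sum>i\<in>UNIV - {ystar}. c i) = 0" using F by (intro sum.neutral) auto
  finally have "c ystar = 1" using cs by simp
  then show "c = onehot ystar" using F unfolding onehot_def by auto
qed

theorem theorem2: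
  fixes p :: "'k::finite \<Rightarrow> real" and q :: real and ystar :: 'k
  assumes "card (UNIV :: 'k set) \<ge> 2"
    and "p \<in> simplex"
    and "\<forall>y. y \<noteq> ystar \<longrightarrow> p y < p ystar"
    and "q > 1"
  shows "{c \<in> simplex. \<forall>c' \<in> simplex. R_GCE q p c \<le> R_GCE q p c'} = {onehot ystar}"
proof -
  have qp: "q > 0" using assms(4) by simp
  have Rle: "R_GCE q p c \<le> R_GCE q p c' \<longleftrightarrow> (\<Sum>y\<in>UNIV. p y * c' y powr q) \<le> (\<Sum>y\<in>UNIV. p y * c y powr q)" for c c'
  proof -
    have "R_GCE q p c \<le> R_GCE q p c' \<longleftrightarrow> (\<Sum>y\<in>UNIV. p y * c' y powr q) / q \<le> (\<Sum>y\<in>UNIV. p y * c y powr q) / q"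
      unfolding R_eq[OF assms(2)] by linarith
    also have "\<dots> \<longleftrightarrow> (\<Sum>y\<in>UNIV. p y * c' y powr q) \<le> (\<Sum>y\<in>UNIV. p y * c y powr q)"
      using qp by (simp add: divide_le_cancel)
    finally show ?thesis .
  qed
  show ?thesis
  proof (intro equalityI subsetI)
    fix c assume "c \<in> {c \<in> simplex. \<forall>c' \<in> simplex. R_GCE q p c \<le> R_GCE q p c'}"
    then have c: "c \<in> simplex" and m: "R_GCE q p c \<le> R_GCE q p (onehot ystar)"
      using onehot_simplex by auto
    have "p ystar \<le> (\<Sum>y\<in>UNIV. p y * c y powr q)" using m unfolding Rle S_onehot .
    then have "(\<Sum>y\<in>UNIV. p y * c y powr q) = p ystar"
      using S_bound(1)[OF assms(2,3,4) c] by linarith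
    then show "c \<in> {onehot ystar}" using S_bound(2)[OF assms(2,3,4) c] by simp
  next
    fix c assume "c \<in> {onehot ystar}"
    then have "c = onehot ystar" by simp
    then show "c \<in> {c \<in> simplex. \<forall>c' \<in> simplex. R_GCE q p c \<le> R_GCE q p c'}"
      using onehot_simplex S_bound(1)[OF assms(2,3,4)] by (auto simp: Rle S_onehot)
  qed
qed

end
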